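(* Let $n\ge3$ be an integer and $\mathbb F$ a finite field, and let $\mathcal G_n$ be the Ferrers diagram with column heights $(n,n-1,\dots,n-1,1)$ ($n-2$ columns of height $n-1$). Let $\mathcal C_0$ be an $[(n-1)\times(n-1),(n-1)(n-3),3]_{\mathbb F}$ MRD code, viewed inside $\mathbb F^{\mathcal G_n}$ by placing each matrix in the top-left $(n-1)\times(n-1)$ block of an $n\times n$ matrix (padding with zeros). Let $\mathcal C_0'\subseteq\mathbb F^{(n-2)\times(n-2)}$ be the set of matrices obtained from elements of $\mathcal C_0$ (as $(n-1)\times(n-1)$ matrices) by deleting the first row and first column, and let $A'\in\mathbb F^{(n-2)\times(n-2)}\setminus\mathcal C_0'$. Define $A\in\mathbb F^{n\times n}$ by $A_{i,j}=1$ if $(i,j)\in\{(1,n),(n,1)\}$, $A_{i,j}=A'_{i-1,j-1}$ if $2\le i,j\le n-1$, and $A_{i,j}=0$ otherwise. Then $\mathcal C_0\oplus\langle A\rangle_{\mathbb F}$ is a $[\mathcal G_n,\nu_{\min}(\mathcal G_n,3),3]_{\mathbb F}$ MFD code, where $\nu_{\min}(\mathcal G_n,3)=(n-2)^2$.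
   Context: A Ferrers diagram $\mathcal D\subseteq\{1,2,\dots\}^2$ (first coordinate = row) is given by column heights $c_i$; $\nu_j(\mathcal D,d)=\sum_{i\ge j+1}\max\{0,c_i-d+j\}$ for $0\le j\le d-1$ and $\nu_{\min}(\mathcal D,d)=\min_j\nu_j(\mathcal D,d)$. For $\mathcal D\subseteq[n]^2$, $\mathbb F^{\mathcal D}$ is the space of $n\times n$ matrices over $\mathbb F$ with zero entries outside $\mathcal D$. A $[\mathcal D,k,d]_{\mathbb F}$ code is a $k$-dimensional subspace of $\mathbb F^{\mathcal D}$ whose nonzero elements have minimum rank $d$; it is MFD if $k=\nu_{\min}(\mathcal D,d)$. An $[m\times n,k,d]_{\mathbb F}$ code is a $k$-dimensional subspace of $\mathbb F^{m\times n}$ with minimum rank $d$ among nonzero elements; it is MRD if $k=\max(m,n)(\min(m,n)-d+1)$. *)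

theory Defs
  imports Main HOL.Vector_Spaces "HOL-Library.Function_Algebras"
begin

text \<open>Matrices over a field are functions nat => nat => 'a, indexed from 1
 (row index first). The space of m x n matrices is the set of such functions vanishing outside
 rows 1..m, columns 1..n; thus padding an (n-1)x(n-1) matrix with zeros to an n x n matrix
 is literally the identity in this representation.\<close>

definition vscale :: "'a::field \<Rightarrow> (nat \<Rightarrow> 'a) \<Rightarrow> (nat \<Rightarrow> 'a)" where
  "vscale c v = (\<lambda>i. c * v i)"

definition mscale :: "'a::field \<Rightarrow> (nat \<Rightarrow> nat \<Rightarrow> 'a) \<Rightarrow> (nat \<Rightarrow> nat \<Rightarrow> 'a)" where
  "mscale c M = (\<lambda>i j. c * M i j)"

lemma vector_space_vscale: "vector_space (vscale :: 'a::field \<Rightarrow> _)"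
  by unfold_locales (auto simp: vscale_def algebra_simps plus_fun_def)

lemma vector_space_mscale: "vector_space (mscale :: 'a::field \<Rightarrow> _)"
  by unfold_locales (auto simp: mscale_def algebra_simps plus_fun_def)

definition mrank :: "(nat \<Rightarrow> nat \<Rightarrow> 'a::field) \<Rightarrow> nat" where
  "mrank M = vector_space.dim vscale (range (\<lambda>j i. M i j))"

definition mat_subspace :: "(nat \<Rightarrow> nat \<Rightarrow> 'a::field) set \<Rightarrow> bool" where
  "mat_subspace S = module.subspace mscale S"

definition mat_dim :: "(nat \<Rightarrow> nat \<Rightarrow> 'a::field) set \<Rightarrow> nat" where
  "mat_dim S = vector_space.dim mscale S"

definition mat_space :: "nat \<Rightarrow> nat \<Rightarrow> (nat \<Rightarrow> nat \<Rightarrow> 'a::zero) set" where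
  "mat_space m n = {M. \<forall>i j. M i j \<noteq> 0 \<longrightarrow> 1 \<le> i \<and> i \<le> m \<and> 1 \<le> j \<and> j \<le> n}"

definition ferrers_space :: "(nat \<times> nat) set \<Rightarrow> (nat \<Rightarrow> nat \<Rightarrow> 'a::zero) set" where
  "ferrers_space D = {M. \<forall>i j. M i j \<noteq> 0 \<longrightarrow> (i, j) \<in> D}"

definition min_rank_is :: "(nat \<Rightarrow> nat \<Rightarrow> 'a::field) set \<Rightarrow> nat \<Rightarrow> bool" where
  "min_rank_is S d = ((S \<noteq> {0} \<longrightarrow> (\<exists>M\<in>S. M \<noteq> 0 \<and> mrank M = d)) \<and> (\<forall>M\<in>S. M \<noteq> 0 \<longrightarrow> d \<le> mrank M))"

definition rank_code :: "nat \<Rightarrow> nat \<Rightarrow> (nat \<Rightarrow> nat \<Rightarrow> 'a::field) set \<Rightarrow> nat \<Rightarrow> nat \<Rightarrow> bool" where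
  "rank_code m n C k d = (C \<subseteq> mat_space m n \<and> mat_subspace C \<and> mat_dim C = k \<and> min_rank_is C d)"

definition MRD_code :: "nat \<Rightarrow> nat \<Rightarrow> (nat \<Rightarrow> nat \<Rightarrow> 'a::field) set \<Rightarrow> nat \<Rightarrow> nat \<Rightarrow> bool" where
  "MRD_code m n C k d = (rank_code m n C k d \<and> k = max m n * (min m n + 1 - d))"

text \<open>Ferrers diagram with column heights cs (column i has height cs!(i-1)); cells are
 (row, column), top-left justified.\<close>
definition ferrers :: "nat list \<Rightarrow> (nat \<times> nat) set" where
  "ferrers cs = {(r, i). 1 \<le> i \<and> i \<le> length cs \<and> 1 \<le> r \<and> r \<le> cs ! (i - 1)}"

text \<open>nu_j(D,d) = sum_{i >= j+1} max(0, c_i - d + 1 + j) (natural subtraction truncates at 0).\<close>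
definition nu :: "nat list \<Rightarrow> nat \<Rightarrow> nat \<Rightarrow> nat" where
  "nu cs d j = (\<Sum>i\<in>{j+1..length cs}. cs ! (i - 1) + j + 1 - d)"

definition nu_min :: "nat list \<Rightarrow> nat \<Rightarrow> nat" where
  "nu_min cs d = Min (nu cs d ` {0..<d})"

definition ferrers_code :: "(nat \<times> nat) set \<Rightarrow> (nat \<Rightarrow> nat \<Rightarrow> 'a::field) set \<Rightarrow> nat \<Rightarrow> nat \<Rightarrow> bool" where
  "ferrers_code D C k d = (C \<subseteq> ferrers_space D \<and> mat_subspace C \<and> mat_dim C = k \<and> min_rank_is C d)"

definition MFD_code :: "nat list \<Rightarrow> (nat \<Rightarrow> nat \<Rightarrow> 'a::field) set \<Rightarrow> nat \<Rightarrow> nat \<Rightarrow> bool" where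
  "MFD_code cs C k d = (ferrers_code (ferrers cs) C k d \<and> k = nu_min cs d)"

definition G_heights :: "nat \<Rightarrow> nat list" where
  "G_heights n = [n] @ replicate (n - 2) (n - 1) @ [1]"

definition del_first :: "(nat \<Rightarrow> nat \<Rightarrow> 'a::zero) \<Rightarrow> (nat \<Rightarrow> nat \<Rightarrow> 'a)" where
  "del_first M = (\<lambda>i j. if 1 \<le> i \<and> 1 \<le> j then M (i + 1) (j + 1) else 0)"

definition build_A :: "nat \<Rightarrow> (nat \<Rightarrow> nat \<Rightarrow> 'a::{zero,one}) \<Rightarrow> (nat \<Rightarrow> nat \<Rightarrow> 'a)" where
  "build_A n A' = (\<lambda>i j. if (i, j) \<in> {(1, n), (n, 1)} then 1
      else if 2 \<le> i \<and> i \<le> n - 1 \<and> 2 \<le> j \<and> j \<le> n - 1 then A' (i - 1) (j - 1) else 0)"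

end

theory Submission imports Defs begin

interpretation vs: vector_space "vscale :: 'a::field \<Rightarrow> (nat \<Rightarrow> 'a) \<Rightarrow> _"
  by (rule vector_space_vscale)
interpretation ms: vector_space "mscale :: 'a::field \<Rightarrow> (nat \<Rightarrow> nat \<Rightarrow> 'a) \<Rightarrow> _"
  by (rule vector_space_mscale)

lemma col_range_sub:
  fixes M :: "nat \<Rightarrow> nat \<Rightarrow> 'a::field"
  assumes "M \<in> mat_space m k"
  shows "range (\<lambda>j i. M i j) \<subseteq> insert 0 ((\<lambda>j i. M i j) ` {1..k})"
proof
  fix x assume "x \<in> range (\<lambda>j i. M i j)"
  then obtain j where x: "x = (\<lambda>i. M i j)" by auto
  show "x \<in> insert 0 ((\<lambda>j i. M i j) ` {1..k})"
  proof (cases "j \<in> {1..k}")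
    case True then show ?thesis using x by blast
  next
    case False
    have "x = 0"
    proof
      fix i show "x i = 0 i" using assms False unfolding x mat_space_def by auto
    qed
    then show ?thesis by simp
  qed
qed


lemma mrank_le:
  fixes M :: "nat \<Rightarrow> nat \<Rightarrow> 'a::field"
  assumes "M \<in> mat_space m k"
  shows "mrank M \<le> k"
proof -
  have "range (\<lambda>j i. M i j) \<subseteq> vs.span ((\<lambda>j i. M i j) ` {1..k})"
  proof
    fix x assume "x \<in> range (\<lambda>j i. M i j)"
    then have "x \<in> insert 0 ((\<lambda>j i. M i j) ` {1..k})" using col_range_sub[OF assms] by blast
    then show "x \<in> vs.span ((\<lambda>j i. M i j) ` {1..k})"
      using vs.span_zero[of "(\<lambda>j i. M i j) ` {1..k}"] vs.span_base[of x] by (cases "x = 0") auto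
  qed
  then have "vs.dim (range (\<lambda>j i. M i j)) \<le> card ((\<lambda>j i. M i j) ` {1..k})"
    by (intro vs.dim_le_card) auto
  also have "\<dots> \<le> k" using card_image_le[of "{1..k}"] by simp
  finally show ?thesis by (simp add: mrank_def)
qed


lemma card_le_dim_fin:
  fixes V :: "(nat \<Rightarrow> 'a::field) set"
  assumes "finite V" "B \<subseteq> V" "vs.independent B"
  shows "card B \<le> vs.dim V"
proof -
  obtain C where C: "B \<subseteq> C" "C \<subseteq> V" "vs.independent C" "V \<subseteq> vs.span C"
    by (rule vs.maximal_independent_subset_extend[OF assms(2,3)])
  have "card C = vs.dim V" by (rule vs.basis_card_eq_dim[OF C(2,4,3)])
  moreover have "finite C" using C(2) assms(1) by (rule finite_subset)
  moreover have "card B \<le> card C" using C(1) \<open>finite C\<close> by (rule card_mono[rotated])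
  ultimately show ?thesis by simp
qed


lemma mrank_ge3:
  fixes X :: "nat \<Rightarrow> nat \<Rightarrow> 'a::field"
  assumes "X \<in> mat_space n n" "c \<noteq> 0" "2 \<le> n"
    and col: "\<And>k. X k n = (if k = 1 then c else 0)"
    and "X n 1 = c" and "X n j = 0" and "X i j \<noteq> 0" and "i \<noteq> 1"
  shows "3 \<le> mrank X"
proof -
  define w where "w = (\<lambda>k. X k n)"
  define v where "v = (\<lambda>k. X k j)"
  define u where "u = (\<lambda>k. X k 1)"
  have fin: "finite (range (\<lambda>j i. X i j))"
    using col_range_sub[OF assms(1)] finite_subset by blast
  have "w 1 = c" using col by (simp add: w_def)
  then have "w \<noteq> 0" using assms(2) by auto
  then have w0: "w \<notin> vs.span {}" by simp
  have i1: "vs.independent {w}" using vs.independent_insertI[OF w0 vs.independent_empty] .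
  have v1: "v \<notin> vs.span {w}"
  proof
    assume "v \<in> vs.span {w}"
    then obtain k where "v = vscale k w" by (auto simp: vs.span_singleton)
    then have "v i = k * w i" by (simp add: vscale_def)
    then show False using assms(7,8) col by (simp add: v_def w_def)
  qed
  have i2: "vs.independent {v, w}" using vs.independent_insertI[OF v1 i1] .
  have u1: "u \<notin> vs.span {v, w}"
  proof
    assume "u \<in> vs.span {v, w}"
    then obtain k where "u - vscale k v \<in> vs.span {w}" using vs.span_insert[of v "{w}"] by blast
    then obtain k' where "u - vscale k v = vscale k' w" by (auto simp: vs.span_singleton)
    then have "u n - k * v n = k' * w n" by (simp add: vscale_def fun_eq_iff)
    moreover have "w n = 0" using col assms(3) by (simp add: w_def)
    ultimately show False using assms(2,5,6) by (simp add: u_def v_def)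
  qed
  have i3: "vs.independent {u, v, w}" using vs.independent_insertI[OF u1 i2] .
  have "u \<notin> {v, w}" using u1 vs.span_superset by blast
  moreover have "v \<noteq> w" using v1 vs.span_superset by blast
  ultimately have "card {u, v, w} = 3" by auto
  moreover have "card {u, v, w} \<le> vs.dim (range (\<lambda>j i. X i j))"
    by (rule card_le_dim_fin[OF fin _ i3]) (auto simp: u_def v_def w_def)
  ultimately show ?thesis by (simp add: mrank_def)
qed


lemma G_len: "length (G_heights n) = n" if "n \<ge> 3"
  using that by (simp add: G_heights_def)

lemma G_nth:
  assumes "n \<ge> 3" "k < n"
  shows "G_heights n ! k = (if k = 0 then n else if k = n - 1 then 1 else n - 1)"
proof -
  have "G_heights n = [n] @ (replicate (n - 2) (n - 1) @ [1])" by (simp add: G_heights_def)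
  then show ?thesis using assms
    by (auto simp: nth_append nth_Cons' nth_replicate)
qed

lemma sum_const_ivl:
  assumes "\<And>i. i \<in> {a..b} \<Longrightarrow> f i = (v::nat)"
  shows "sum f {a..b} = (Suc b - a) * v"
proof -
  have "sum f {a..b} = sum (\<lambda>_. v) {a..b}" by (rule sum.cong) (auto simp: assms)
  then show ?thesis by simp
qed

lemma nu_G:
  assumes "n \<ge> 3" "j < 3"
  shows "nu (G_heights n) 3 j = (n - 2)^2"
proof -
  let ?g = "\<lambda>i. G_heights n ! (i - 1) + j + 1 - 3"
  have last: "sum ?g {j+1..n} = sum ?g {j+1..n-1} + ?g n"
  proof -
    have "n = Suc (n - 1)" using assms by simp
    then have e: "{j+1..n} = insert n {j+1..n-1}" using assms by auto
    have nn: "n \<notin> {j+1..n-1}" using assms by auto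
    have "sum ?g (insert n {j+1..n-1}) = ?g n + sum ?g {j+1..n-1}"
      using nn by (intro sum.insert) auto
    then show ?thesis unfolding e by linarith
  qed
  have gn: "?g n = (if j = 2 then 1 else 0)" using assms G_nth[of n "n-1"] by auto
  have mid: "\<And>i. i \<in> {2..n-1} \<Longrightarrow> ?g i = n - 1 + j - 2"
    using assms G_nth[of n] by auto
  have nu_eq: "nu (G_heights n) 3 j = sum ?g {j+1..n}"
    by (simp add: nu_def G_len[OF assms(1)])
  obtain m where m: "n = m + 3" using assms(1) by (metis add.commute le_Suc_ex)
  consider "j = 0" | "j = 1" | "j = 2" using assms(2) by linarith
  then show ?thesis
  proof cases
    case 1
    have "{j+1..n-1} = insert 1 {2..n-1}" using assms 1 by auto
    then have "sum ?g {j+1..n-1} = ?g 1 + sum ?g {2..n-1}" by simp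
    also have "sum ?g {2..n-1} = (n - 2) * (n - 3)"
      using sum_const_ivl[of 2 "n-1" ?g "n - 1 + j - 2", OF mid] 1 assms by simp
    also have "?g 1 = n - 2" using 1 G_nth[of n 0] assms by simp
    finally show ?thesis using nu_eq last gn 1 m by (simp add: power2_eq_square algebra_simps)
  next
    case 2
    have "sum ?g {j+1..n-1} = (n - 2) * (n - 2)"
      using sum_const_ivl[of 2 "n-1" ?g "n - 1 + j - 2", OF mid] 2 assms by (simp add: numeral_2_eq_2)
    then show ?thesis using nu_eq last gn 2 m by (simp add: power2_eq_square algebra_simps)
  next
    case 3
    have mid': "\<And>i. i \<in> {3..n-1} \<Longrightarrow> ?g i = n - 1 + j - 2" using mid by auto
    have "sum ?g {j+1..n-1} = (n - 3) * (n - 1)"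
      using sum_const_ivl[of 3 "n-1" ?g "n - 1 + j - 2", OF mid'] 3 assms by (simp add: numeral_3_eq_3)
    then show ?thesis using nu_eq last gn 3 m by (simp add: power2_eq_square algebra_simps)
  qed
qed

lemma numin_G:
  assumes "n \<ge> 3"
  shows "nu_min (G_heights n) 3 = (n - 2)^2"
proof -
  have e: "{0..<3::nat} = {0,1,2}" by auto
  have "nu (G_heights n) 3 ` {0..<3} = {(n - 2)^2}"
    unfolding e using nu_G[OF assms] by simp
  then show ?thesis by (simp add: nu_min_def)
qed


lemma X_entries:
  fixes M :: "nat \<Rightarrow> nat \<Rightarrow> 'a::field" and c :: 'a
  assumes n: "n \<ge> 3" and M: "M \<in> mat_space (n - 1) (n - 1)" and A': "A' \<in> mat_space (n - 2) (n - 2)"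
  defines "X \<equiv> (\<lambda>i j. M i j + c * build_A n A' i j)"
  shows "X k n = (if k = 1 then c else 0)"
    and "X n 1 = c"
    and "j \<noteq> 1 \<Longrightarrow> X n j = 0"
    and "2 \<le> i \<Longrightarrow> i \<le> n - 1 \<Longrightarrow> 2 \<le> j \<Longrightarrow> j \<le> n - 1 \<Longrightarrow> X i j = M i j + c * A' (i - 1) (j - 1)"
    and "X \<in> mat_space n n"
    and "X \<in> ferrers_space (ferrers (G_heights n))"
proof -
  have M0: "\<And>i j. \<not> (1 \<le> i \<and> i \<le> n - 1 \<and> 1 \<le> j \<and> j \<le> n - 1) \<Longrightarrow> M i j = 0"
    using M unfolding mat_space_def by blast
  have A0: "\<And>i j. \<not> (1 \<le> i \<and> i \<le> n - 2 \<and> 1 \<le> j \<and> j \<le> n - 2) \<Longrightarrow> A' i j = 0"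
    using A' unfolding mat_space_def by blast
  have Mkn: "M k' n = 0" for k' by (rule M0) (use n in auto)
  have Mnj: "M n j' = 0" for j' by (rule M0) (use n in auto)
  show "X k n = (if k = 1 then c else 0)"
    using n Mkn[of k] by (auto simp: X_def build_A_def)
  show "X n 1 = c"
    using n Mnj[of 1] by (auto simp: X_def build_A_def)
  show "j \<noteq> 1 \<Longrightarrow> X n j = 0"
    using n Mnj[of j] by (auto simp: X_def build_A_def)
  show "2 \<le> i \<Longrightarrow> i \<le> n - 1 \<Longrightarrow> 2 \<le> j \<Longrightarrow> j \<le> n - 1 \<Longrightarrow> X i j = M i j + c * A' (i - 1) (j - 1)"
    using n by (auto simp: X_def build_A_def)
  have nz: "X i j \<noteq> 0 \<Longrightarrow> (1 \<le> i \<and> i \<le> n - 1 \<and> 1 \<le> j \<and> j \<le> n - 1) \<or> (i = 1 \<and> j = n) \<or> (i = n \<and> j = 1)" for i j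
  proof (rule ccontr)
    assume h: "X i j \<noteq> 0" "\<not> ((1 \<le> i \<and> i \<le> n - 1 \<and> 1 \<le> j \<and> j \<le> n - 1) \<or> (i = 1 \<and> j = n) \<or> (i = n \<and> j = 1))"
    have "M i j = 0" using M0 h(2) by blast
    moreover have "build_A n A' i j = 0" using h(2) n by (auto simp: build_A_def)
    ultimately show False using h(1) by (simp add: X_def)
  qed
  show "X \<in> mat_space n n"
    unfolding mat_space_def using nz n by fastforce
  show "X \<in> ferrers_space (ferrers (G_heights n))"
    unfolding ferrers_space_def
  proof (intro CollectI allI impI)
    fix i j assume "X i j \<noteq> 0"
    then have h: "(1 \<le> i \<and> i \<le> n - 1 \<and> 1 \<le> j \<and> j \<le> n - 1) \<or> (i = 1 \<and> j = n) \<or> (i = n \<and> j = 1)"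
      by (rule nz)
    have g: "G_heights n ! (j - 1) = (if j - 1 = 0 then n else if j - 1 = n - 1 then 1 else n - 1)"
      if "1 \<le> j" "j \<le> n" using G_nth[OF n, of "j - 1"] that by simp
    show "(i, j) \<in> ferrers (G_heights n)"
      unfolding ferrers_def using h g n G_len[OF n] by auto
  qed
qed

theorem theorem6p3:
  fixes n :: nat
    and C0 :: "(nat \<Rightarrow> nat \<Rightarrow> 'a::{finite,field}) set"
    and A' :: "nat \<Rightarrow> nat \<Rightarrow> 'a"
  assumes "n \<ge> 3"
    and "MRD_code (n - 1) (n - 1) C0 ((n - 1) * (n - 3)) 3"
    and "A' \<in> mat_space (n - 2) (n - 2)"
    and "A' \<notin> del_first ` C0"
  shows "nu_min (G_heights n) 3 = (n - 2)^2
    \<and> MFD_code (G_heights n) {\<lambda>i j. M i j + c * build_A n A' i j | M c. M \<in> C0}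
        (nu_min (G_heights n) 3) 3"
proof -
  have n3: "n \<ge> 3" by (rule assms(1))
  define A where "A = build_A n A'"
  define C where "C = {\<lambda>i j. M i j + c * build_A n A' i j | M c. M \<in> C0}"
  have C0sub: "C0 \<subseteq> mat_space (n - 1) (n - 1)" and C0ss: "ms.subspace C0"
    and C0dim: "ms.dim C0 = (n - 1) * (n - 3)" and C0rk: "min_rank_is C0 3"
    using assms(2) by (auto simp: MRD_code_def rank_code_def mat_subspace_def mat_dim_def)
  have C0zero: "0 \<in> C0" using C0ss by (rule ms.subspace_0)
  have memC: "(\<lambda>i j. M i j + c * build_A n A' i j) \<in> C" if "M \<in> C0" for M c
    unfolding C_def using that by blast
  have elemC: "\<exists>M c. X = (\<lambda>i j. M i j + c * build_A n A' i j) \<and> M \<in> C0" if "X \<in> C" for X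
    using that unfolding C_def by blast
  have AC: "A \<in> C"
  proof -
    have eqA: "A = (\<lambda>i j. (0::nat\<Rightarrow>nat\<Rightarrow>'a) i j + 1 * build_A n A' i j)" by (simp add: A_def)
    show ?thesis unfolding eqA by (rule memC[OF C0zero])
  qed
  have C0C: "C0 \<subseteq> C"
  proof
    fix M assume "M \<in> C0"
    moreover have "M = (\<lambda>i j. M i j + 0 * build_A n A' i j)" by simp
    ultimately show "M \<in> C" using memC[of M 0] by simp
  qed
  have A1n: "A 1 n = 1" by (simp add: A_def build_A_def)
  have A_notin: "A \<notin> C0"
  proof
    assume "A \<in> C0"
    then have "A \<in> mat_space (n - 1) (n - 1)" using C0sub by blast
    then have "A 1 n \<noteq> 0 \<longrightarrow> n \<le> n - 1" unfolding mat_space_def by blast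
    then show False using A1n n3 by simp
  qed
  have rk3: "3 \<le> mrank X" if XC: "X \<in> C" and X0: "X \<noteq> 0" for X
  proof -
    obtain M c where X: "X = (\<lambda>i j. M i j + c * build_A n A' i j)" and M: "M \<in> C0"
      using elemC[OF XC] by blast
    have Mm: "M \<in> mat_space (n - 1) (n - 1)" using M C0sub by blast
    note E = X_entries[OF n3 Mm assms(3), where c = c]
    show ?thesis
    proof (cases "c = 0")
      case True
      then have "X = M" by (simp add: X)
      then show ?thesis using C0rk M X0 by (auto simp: min_rank_is_def)
    next
      case cne: False
      have "\<exists>i j. 2 \<le> i \<and> i \<le> n - 1 \<and> 2 \<le> j \<and> j \<le> n - 1 \<and> M i j + c * A' (i - 1) (j - 1) \<noteq> 0"
      proof (rule ccontr)
        assume h: "\<not> (\<exists>i j. 2 \<le> i \<and> i \<le> n - 1 \<and> 2 \<le> j \<and> j \<le> n - 1 \<and> M i j + c * A' (i - 1) (j - 1) \<noteq> 0)"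
        have h': "M i j + c * A' (i - 1) (j - 1) = 0" if "2 \<le> i" "i \<le> n - 1" "2 \<le> j" "j \<le> n - 1" for i j
          using h that by blast
        have "A' = del_first (mscale (- 1 / c) M)"
        proof (intro ext)
          fix i j
          show "A' i j = del_first (mscale (- 1 / c) M) i j"
          proof (cases "1 \<le> i \<and> i \<le> n - 2 \<and> 1 \<le> j \<and> j \<le> n - 2")
            case True
            have "M (i + 1) (j + 1) + c * A' (i + 1 - 1) (j + 1 - 1) = 0"
              by (rule h') (use True n3 in auto)
            then have "M (i + 1) (j + 1) = - (c * A' i j)" by (simp add: eq_neg_iff_add_eq_0)
            then show ?thesis using True cne by (simp add: del_first_def mscale_def)
          next
            case f: False
            have "A' i j = 0" using assms(3) f unfolding mat_space_def by force
            moreover have "M (i + 1) (j + 1) = 0" if "1 \<le> i" "1 \<le> j"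
              using Mm f that n3 unfolding mat_space_def by force
            ultimately show ?thesis by (simp add: del_first_def mscale_def)
          qed
        qed
        moreover have "mscale (- 1 / c) M \<in> C0" using C0ss M by (rule ms.subspace_scale)
        ultimately show False using assms(4) by blast
      qed
      then obtain i j where ij: "2 \<le> i" "i \<le> n - 1" "2 \<le> j" "j \<le> n - 1"
        and nzij: "M i j + c * A' (i - 1) (j - 1) \<noteq> 0" by blast
      have "3 \<le> mrank (\<lambda>i j. M i j + c * build_A n A' i j)"
      proof (rule mrank_ge3[where c = c and i = i and j = j])
        show "(\<lambda>i j. M i j + c * build_A n A' i j) \<in> mat_space n n" using E(5) .
        show "c \<noteq> 0" by (rule cne)
        show "2 \<le> n" using n3 by simp
        show "\<And>k. (\<lambda>i j. M i j + c * build_A n A' i j) k n = (if k = 1 then c else 0)" using E(1) by simp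
        show "(\<lambda>i j. M i j + c * build_A n A' i j) n 1 = c" using E(2) by simp
        show "(\<lambda>i j. M i j + c * build_A n A' i j) n j = 0" using E(3)[of j] ij by simp
        show "(\<lambda>i j. M i j + c * build_A n A' i j) i j \<noteq> 0" using E(4)[OF ij] nzij by (simp only: not_False_eq_True)
        show "i \<noteq> 1" using ij by simp
      qed
      then show ?thesis using X by simp
    qed
  qed
  have Css: "ms.subspace C"
  proof (rule ms.subspaceI)
    show "0 \<in> C" using C0C C0zero by blast
  next
    fix x y assume xC: "x \<in> C" and yC: "y \<in> C"
    obtain M1 c1 where x: "x = (\<lambda>i j. M1 i j + c1 * build_A n A' i j)" "M1 \<in> C0"
      using elemC[OF xC] by blast
    obtain M2 c2 where y: "y = (\<lambda>i j. M2 i j + c2 * build_A n A' i j)" "M2 \<in> C0"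
      using elemC[OF yC] by blast
    have eq: "x + y = (\<lambda>i j. (M1 + M2) i j + (c1 + c2) * build_A n A' i j)"
      by (simp add: x y fun_eq_iff algebra_simps)
    have "M1 + M2 \<in> C0" using C0ss x(2) y(2) by (rule ms.subspace_add)
    then show "x + y \<in> C" unfolding eq by (rule memC)
  next
    fix k x assume xC: "x \<in> C"
    obtain M1 c1 where x: "x = (\<lambda>i j. M1 i j + c1 * build_A n A' i j)" "M1 \<in> C0"
      using elemC[OF xC] by blast
    have eq: "mscale k x = (\<lambda>i j. (mscale k M1) i j + (k * c1) * build_A n A' i j)"
      by (simp add: x fun_eq_iff mscale_def algebra_simps)
    have "mscale k M1 \<in> C0" using C0ss x(2) by (rule ms.subspace_scale)
    then show "mscale k x \<in> C" unfolding eq by (rule memC)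
  qed
  have C0triv: "C0 \<subseteq> {0}" if "n = 3"
  proof
    fix M assume M: "M \<in> C0"
    show "M \<in> {0}"
    proof (rule ccontr)
      assume "M \<notin> {0}"
      then have "3 \<le> mrank M" using C0rk M by (auto simp: min_rank_is_def)
      moreover have "mrank M \<le> n - 1" using M C0sub mrank_le by blast
      ultimately show False using that by simp
    qed
  qed
  obtain B where B: "B \<subseteq> C0" "ms.independent B" "C0 \<subseteq> ms.span B" "card B = ms.dim C0"
    by (rule ms.basis_exists)
  have spanB: "ms.span B = C0" using ms.span_subspace[OF B(1) B(3) C0ss] .
  have finB: "finite B"
  proof (cases "n = 3")
    case True
    then have "B \<subseteq> {0}" using C0triv B(1) by blast
    then show ?thesis using finite_subset by blast
  next
    case False
    then have "n \<ge> 4" using n3 by simp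
    then have "card B > 0" using B(4) C0dim by simp
    then show ?thesis using card_ge_0_finite by blast
  qed
  have AnB: "A \<notin> ms.span B" using A_notin spanB by simp
  have indAB: "ms.independent (insert A B)" by (rule ms.independent_insertI[OF AnB B(2)])
  have dimC: "ms.dim C = card (insert A B)"
  proof (rule ms.dim_unique[OF _ _ indAB refl])
    show "insert A B \<subseteq> C" using AC B(1) C0C by blast
    show "C \<subseteq> ms.span (insert A B)"
    proof
      fix X assume XC: "X \<in> C"
      obtain M c where X: "X = (\<lambda>i j. M i j + c * build_A n A' i j)" "M \<in> C0"
        using elemC[OF XC] by blast
      have "X = M + mscale c A" by (simp add: X A_def fun_eq_iff mscale_def)
      moreover have "M \<in> ms.span (insert A B)"
        using X(2) spanB ms.span_mono[of B "insert A B"] by blast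
      moreover have "mscale c A \<in> ms.span (insert A B)"
        by (rule ms.span_scale) (rule ms.span_base, simp)
      ultimately show "X \<in> ms.span (insert A B)" by (simp add: ms.span_add)
    qed
  qed
  have AnB': "A \<notin> B" using AnB ms.span_base by blast
  have cardAB: "card (insert A B) = (n - 1) * (n - 3) + 1"
    using finB AnB' B(4) C0dim by simp
  obtain m where m: "n = m + 3" using n3 by (metis add.commute le_Suc_ex)
  have dimC': "ms.dim C = (n - 2)^2"
    using dimC cardAB m by (simp add: power2_eq_square algebra_simps)
  have ex3: "\<exists>X\<in>C. X \<noteq> 0 \<and> mrank X = 3"
  proof (cases "C0 = {0}")
    case False
    then obtain M where "M \<in> C0" "M \<noteq> 0" "mrank M = 3" using C0rk by (auto simp: min_rank_is_def)
    then show ?thesis using C0C by blast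
  next
    case True
    have "ms.dim C0 = 0"
    proof -
      have "ms.dim C0 = ms.dim ({} :: (nat \<Rightarrow> nat \<Rightarrow> 'a) set)"
        by (rule ms.span_eq_dim) (simp add: True)
      also have "\<dots> = 0" using ms.dim_eq_card_independent[OF ms.independent_empty] by simp
      finally show ?thesis .
    qed
    then have "n = 3" using C0dim n3 by simp
    have A0: "A \<noteq> 0"
    proof
      assume "A = 0"
      then have "A 1 n = 0" by simp
      then show False using A1n by simp
    qed
    have eqA: "A = (\<lambda>i j. (0::nat\<Rightarrow>nat\<Rightarrow>'a) i j + 1 * build_A n A' i j)" by (simp add: A_def)
    have "(0::nat\<Rightarrow>nat\<Rightarrow>'a) \<in> mat_space (n - 1) (n - 1)" by (simp add: mat_space_def)
    then have "A \<in> mat_space n n" unfolding eqA by (rule X_entries(5)[OF n3 _ assms(3)])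
    then have "mrank A \<le> 3" using mrank_le \<open>n = 3\<close> by blast
    moreover have "3 \<le> mrank A" using rk3[OF AC A0] .
    ultimately show ?thesis using AC A0 by (intro bexI[of _ A]) auto
  qed
  have Cfer: "C \<subseteq> ferrers_space (ferrers (G_heights n))"
  proof
    fix X assume XC: "X \<in> C"
    obtain M c where X: "X = (\<lambda>i j. M i j + c * build_A n A' i j)" "M \<in> C0"
      using elemC[OF XC] by blast
    have "M \<in> mat_space (n - 1) (n - 1)" using X(2) C0sub by blast
    then show "X \<in> ferrers_space (ferrers (G_heights n))"
      unfolding X(1) by (rule X_entries(6)[OF n3 _ assms(3)])
  qed
  have mr: "min_rank_is C 3" unfolding min_rank_is_def using ex3 rk3 by blast
  have "MFD_code (G_heights n) C (nu_min (G_heights n) 3) 3"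
    unfolding MFD_code_def ferrers_code_def mat_subspace_def mat_dim_def
    using Cfer Css dimC' mr numin_G[OF n3] by simp
  then show ?thesis using numin_G[OF n3] unfolding C_def by simp
qed

end
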